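(* Let $Q$ be a Foulis quantale. Then the complete orthomodular lattice $[Q]=\{[t]\mid t\in Q\}$ is a left $Q$-module with action $u\bullet k=(u\cdot k)^{\perp\perp}$ for $u\in Q$, $k\in[Q]$, and it is also a right $\mathbf 2$-module.
   Context: A quantale is a complete lattice $Q$ (join $\bigsqcup$) with associative multiplication distributing over arbitrary joins on both sides; unital if it has a two-sided unit $e$; involutive if it has a join-preserving semigroup involution $*$. A Foulis quantale is a unital involutive quantale $Q$ with an endomap $[-]\colon Q\to Q$ such that: (a) $[s]\cdot[s]=[s]=[s]^*$; (b) $[e]=0$; (c) $s\cdot x=0$ iff $x=[s]\cdot y$ for some $y\in Q$. For $t\in Q$ put $t^\perp=[t^*]$. The set $[Q]$ is a complete orthomodular lattice with order $k_1\le k_2$ iff $k_1=k_2\cdot k_1$, top $[0]$, orthocomplement $k^\perp=[k]$, and joins $\bigvee S=[[\bigsqcup S]]$. A left $Q$-module is a complete lattice $A$ with $\bullet\colon Q\times A\to A$ such that $s\bullet\bigvee B=\bigvee_{x\in B}s\bullet x$, $(\bigsqcup T)\bullet a=\bigvee_{t\in T}t\bullet a$, $u\bullet(v\bullet a)=(u\cdot v)\bullet a$, $e\bullet a=a$. $\mathbf 2$ is the two-element chain with meet as multiplication and identity involution; a complete lattice $A$ is a right $\mathbf 2$-module via $a\bullet1=a$, $a\bullet0=0$. *)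

theory Defs
  imports Main
begin

definition quantale :: "('a::complete_lattice \<Rightarrow> 'a \<Rightarrow> 'a) \<Rightarrow> bool" where
  "quantale mult \<longleftrightarrow>
     (\<forall>a b c. mult (mult a b) c = mult a (mult b c)) \<and>
     (\<forall>a X. mult a (Sup X) = Sup ((\<lambda>x. mult a x) ` X)) \<and>
     (\<forall>a X. mult (Sup X) a = Sup ((\<lambda>x. mult x a) ` X))"

definition unital_quantale :: "('a::complete_lattice \<Rightarrow> 'a \<Rightarrow> 'a) \<Rightarrow> 'a \<Rightarrow> bool" where
  "unital_quantale mult e \<longleftrightarrow> quantale mult \<and> (\<forall>a. mult e a = a \<and> mult a e = a)"

definition involutive_unital_quantale ::
  "('a::complete_lattice \<Rightarrow> 'a \<Rightarrow> 'a) \<Rightarrow> 'a \<Rightarrow> ('a \<Rightarrow> 'a) \<Rightarrow> bool" where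
  "involutive_unital_quantale mult e star \<longleftrightarrow> unital_quantale mult e \<and>
     (\<forall>a. star (star a) = a) \<and>
     (\<forall>a b. star (mult a b) = mult (star b) (star a)) \<and>
     (\<forall>X. star (Sup X) = Sup (star ` X))"

definition foulis_quantale ::
  "('a::complete_lattice \<Rightarrow> 'a \<Rightarrow> 'a) \<Rightarrow> 'a \<Rightarrow> ('a \<Rightarrow> 'a) \<Rightarrow> ('a \<Rightarrow> 'a) \<Rightarrow> bool" where
  "foulis_quantale mult e star br \<longleftrightarrow> involutive_unital_quantale mult e star \<and>
     (\<forall>s. mult (br s) (br s) = br s \<and> star (br s) = br s) \<and>
     br e = bot \<and>
     (\<forall>s x. mult s x = bot \<longleftrightarrow> (\<exists>y. x = mult (br s) y))"

definition bracket_set :: "('a \<Rightarrow> 'a) \<Rightarrow> 'a set" where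
  "bracket_set br = range br"

definition bracket_le :: "('a \<Rightarrow> 'a \<Rightarrow> 'a) \<Rightarrow> 'a \<Rightarrow> 'a \<Rightarrow> bool" where
  "bracket_le mult k1 k2 \<longleftrightarrow> k1 = mult k2 k1"

definition bracket_join :: "('a::complete_lattice \<Rightarrow> 'a) \<Rightarrow> 'a set \<Rightarrow> 'a" where
  "bracket_join br S = br (br (Sup S))"

definition perp :: "('a \<Rightarrow> 'a) \<Rightarrow> ('a \<Rightarrow> 'a) \<Rightarrow> 'a \<Rightarrow> 'a" where
  "perp star br t = br (star t)"

definition complete_lattice_on :: "'b set \<Rightarrow> ('b \<Rightarrow> 'b \<Rightarrow> bool) \<Rightarrow> ('b set \<Rightarrow> 'b) \<Rightarrow> bool" where
  "complete_lattice_on A le J \<longleftrightarrow>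
     (\<forall>x\<in>A. le x x) \<and>
     (\<forall>x\<in>A. \<forall>y\<in>A. le x y \<and> le y x \<longrightarrow> x = y) \<and>
     (\<forall>x\<in>A. \<forall>y\<in>A. \<forall>z\<in>A. le x y \<and> le y z \<longrightarrow> le x z) \<and>
     (\<forall>S. S \<subseteq> A \<longrightarrow> J S \<in> A \<and> (\<forall>x\<in>S. le x (J S)) \<and>
                  (\<forall>y\<in>A. (\<forall>x\<in>S. le x y) \<longrightarrow> le (J S) y))"

definition left_module ::
  "('q::complete_lattice \<Rightarrow> 'q \<Rightarrow> 'q) \<Rightarrow> 'q \<Rightarrow>
   'b set \<Rightarrow> ('b \<Rightarrow> 'b \<Rightarrow> bool) \<Rightarrow> ('b set \<Rightarrow> 'b) \<Rightarrow> ('q \<Rightarrow> 'b \<Rightarrow> 'b) \<Rightarrow> bool" where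
  "left_module qmult qe A le J act \<longleftrightarrow>
     complete_lattice_on A le J \<and>
     (\<forall>s. \<forall>a\<in>A. act s a \<in> A) \<and>
     (\<forall>s B. B \<subseteq> A \<longrightarrow> act s (J B) = J ((\<lambda>x. act s x) ` B)) \<and>
     (\<forall>T. \<forall>a\<in>A. act (Sup T) a = J ((\<lambda>t. act t a) ` T)) \<and>
     (\<forall>u v. \<forall>a\<in>A. act u (act v a) = act (qmult u v) a) \<and>
     (\<forall>a\<in>A. act qe a = a)"

definition right_module ::
  "('q::complete_lattice \<Rightarrow> 'q \<Rightarrow> 'q) \<Rightarrow> 'q \<Rightarrow>
   'b set \<Rightarrow> ('b \<Rightarrow> 'b \<Rightarrow> bool) \<Rightarrow> ('b set \<Rightarrow> 'b) \<Rightarrow> ('b \<Rightarrow> 'q \<Rightarrow> 'b) \<Rightarrow> bool" where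
  "right_module qmult qe A le J act \<longleftrightarrow>
     complete_lattice_on A le J \<and>
     (\<forall>s. \<forall>a\<in>A. act a s \<in> A) \<and>
     (\<forall>s B. B \<subseteq> A \<longrightarrow> act (J B) s = J ((\<lambda>x. act x s) ` B)) \<and>
     (\<forall>T. \<forall>a\<in>A. act a (Sup T) = J ((\<lambda>t. act a t) ` T)) \<and>
     (\<forall>u v. \<forall>a\<in>A. act (act a u) v = act a (qmult u v)) \<and>
     (\<forall>a\<in>A. act a qe = a)"

text \<open>The two-element quantale 2 = bool (meet as multiplication, unit True),
  and the canonical right 2-action on a complete lattice (A, J): a\<bullet>1 = a, a\<bullet>0 = bottom = J {}.\<close>
definition two_action :: "('b set \<Rightarrow> 'b) \<Rightarrow> 'b \<Rightarrow> bool \<Rightarrow> 'b" where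
  "two_action J a b = (if b then a else J {})"

end

theory Submission
  imports Defs
begin

locale fq =
  fixes mult :: "'a::complete_lattice \<Rightarrow> 'a \<Rightarrow> 'a"
    and e :: 'a and star :: "'a \<Rightarrow> 'a" and br :: "'a \<Rightarrow> 'a"
  assumes F: "foulis_quantale mult e star br"
begin

lemma assoc: "mult (mult a b) c = mult a (mult b c)"
  using F unfolding foulis_quantale_def involutive_unital_quantale_def unital_quantale_def quantale_def by blast
lemma supL: "mult a (Sup X) = Sup ((\<lambda>x. mult a x) ` X)"
  using F unfolding foulis_quantale_def involutive_unital_quantale_def unital_quantale_def quantale_def by blast
lemma supR: "mult (Sup X) a = Sup ((\<lambda>x. mult x a) ` X)"
  using F unfolding foulis_quantale_def involutive_unital_quantale_def unital_quantale_def quantale_def by blast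
lemma unitL: "mult e a = a"
  using F unfolding foulis_quantale_def involutive_unital_quantale_def unital_quantale_def by blast
lemma unitR: "mult a e = a"
  using F unfolding foulis_quantale_def involutive_unital_quantale_def unital_quantale_def by blast
lemma inv: "star (star a) = a"
  using F unfolding foulis_quantale_def involutive_unital_quantale_def by blast
lemma star_mult: "star (mult a b) = mult (star b) (star a)"
  using F unfolding foulis_quantale_def involutive_unital_quantale_def by blast
lemma star_Sup: "star (Sup X) = Sup (star ` X)"
  using F unfolding foulis_quantale_def involutive_unital_quantale_def by blast
lemma br_idem: "mult (br s) (br s) = br s"
  using F unfolding foulis_quantale_def by blast
lemma br_star: "star (br s) = br s"
  using F unfolding foulis_quantale_def by blast
lemma br_e: "br e = bot"
  using F unfolding foulis_quantale_def by blast
lemma foulis: "mult s x = bot \<longleftrightarrow> (\<exists>y. x = mult (br s) y)"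
  using F unfolding foulis_quantale_def by blast

lemma mult_bot_left: "mult bot x = bot"
  using supR[of "{}" x] by simp
lemma mult_bot_right: "mult x bot = bot"
  using supL[of x "{}"] by simp
lemma star_bot: "star bot = bot"
  using star_Sup[of "{}"] by simp

lemma L1: "mult s x = bot \<longleftrightarrow> mult (br s) x = x"
proof
  assume "mult s x = bot"
  then obtain y where "x = mult (br s) y" using foulis by blast
  then show "mult (br s) x = x" by (simp add: assoc[symmetric] br_idem)
next
  assume "mult (br s) x = x"
  then show "mult s x = bot" using foulis by metis
qed

lemma L2: "mult s (br s) = bot"
  using L1 br_idem by blast

lemma L2s: "mult (br (br s)) (br s) = bot"
proof -
  have "star (mult (br s) (br (br s))) = bot" using L2 star_bot by simp
  then show ?thesis by (simp add: star_mult br_star)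
qed

lemma L3: "mult (br (star s)) s = bot"
proof -
  have "star (mult (star s) (br (star s))) = bot" using L2 star_bot by simp
  then show ?thesis by (simp add: star_mult br_star inv)
qed

lemma L4: "mult (br (br (star t))) t = t"
  using L3 L1 by blast

lemma L5: "mult t (br (br t)) = t"
proof -
  have "mult (br (br t)) (star t) = star t" using L4[of "star t"] by (simp add: inv)
  hence "star (mult (br (br t)) (star t)) = t" by (simp add: inv)
  then show ?thesis by (simp add: star_mult inv br_star)
qed

lemma proj_eq:
  assumes "\<And>x. mult (br a) x = x \<longleftrightarrow> mult (br b) x = x"
  shows "br a = br b"
proof -
  have 1: "mult (br b) (br a) = br a" using assms br_idem by blast
  have 2: "mult (br a) (br b) = br b" using assms br_idem by blast
  have "br a = star (br a)" by (simp add: br_star)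
  also have "\<dots> = star (mult (br b) (br a))" using 1 by simp
  also have "\<dots> = mult (br a) (br b)" by (simp add: star_mult br_star)
  finally show ?thesis using 2 by simp
qed

lemma L6: "br (br (br t)) = br t"
proof -
  have "mult (br (br t)) x = bot \<longleftrightarrow> mult t x = bot" for x
  proof
    assume "mult t x = bot"
    then obtain y where y: "x = mult (br t) y" using foulis by blast
    show "mult (br (br t)) x = bot" using y L2s by (metis assoc mult_bot_left)
  next
    assume "mult (br (br t)) x = bot"
    then show "mult t x = bot" using L5[of t] by (metis assoc mult_bot_right)
  qed
  then show ?thesis using L1 proj_eq by metis
qed

definition P where "P = range br"
abbreviation le where "le \<equiv> bracket_le mult"
abbreviation phi where "phi s \<equiv> br (br (star s))"

lemma P_star: "k \<in> P \<Longrightarrow> star k = k" unfolding P_def using br_star by auto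
lemma P_idem: "k \<in> P \<Longrightarrow> mult k k = k" unfolding P_def using br_idem by auto
lemma P_brbr: "k \<in> P \<Longrightarrow> br (br k) = k" unfolding P_def using L6 by auto
lemma br_P: "br s \<in> P" unfolding P_def by auto

lemma A: "k \<in> P \<Longrightarrow> mult s k = bot \<longleftrightarrow> le k (br s)"
  unfolding bracket_le_def using L1 by metis

lemma B0: "mult w (phi y) = bot \<longleftrightarrow> mult w y = bot"
proof
  assume "mult w y = bot"
  hence "star (mult w y) = bot" using star_bot by simp
  hence "mult (star y) (star w) = bot" by (simp add: star_mult)
  hence "mult (br (star y)) (star w) = star w" using L1 by blast
  hence "star (mult (br (star y)) (star w)) = w" by (simp add: inv)
  hence w: "mult w (br (star y)) = w" by (simp add: star_mult inv br_star)
  have "mult w (phi y) = mult w (mult (br (star y)) (phi y))"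
    using w by (simp add: assoc[symmetric])
  also have "\<dots> = bot" using L2 mult_bot_right by simp
  finally show "mult w (phi y) = bot" .
next
  assume "mult w (phi y) = bot"
  then show "mult w y = bot" using L4[of y] by (metis assoc mult_bot_left)
qed

lemma B: "k \<in> P \<Longrightarrow> le (phi s) k \<longleftrightarrow> mult (br k) s = bot"
proof -
  assume k: "k \<in> P"
  have "le (phi s) k \<longleftrightarrow> le (phi s) (br (br k))" using P_brbr[OF k] by simp
  also have "\<dots> \<longleftrightarrow> mult (br k) (phi s) = bot" using A[OF br_P] by simp
  also have "\<dots> \<longleftrightarrow> mult (br k) s = bot" using B0 by simp
  finally show ?thesis .
qed

lemma phi_P: "k \<in> P \<Longrightarrow> phi k = k" using P_star P_brbr by simp

lemma Sup_star: "X \<subseteq> P \<Longrightarrow> star (Sup X) = Sup X"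
proof -
  assume "X \<subseteq> P"
  hence "star ` X = X" using P_star by (force simp: image_iff)
  thus ?thesis by (simp add: star_Sup)
qed

lemma J_phi: "X \<subseteq> P \<Longrightarrow> bracket_join br X = phi (Sup X)"
  unfolding bracket_join_def using Sup_star by simp

lemma J_P: "bracket_join br X \<in> P" unfolding bracket_join_def using br_P by simp

lemma J_lub: "X \<subseteq> P \<Longrightarrow> k \<in> P \<Longrightarrow> le (bracket_join br X) k \<longleftrightarrow> (\<forall>x\<in>X. le x k)"
proof -
  assume X: "X \<subseteq> P" and k: "k \<in> P"
  have "le (bracket_join br X) k \<longleftrightarrow> mult (br k) (Sup X) = bot"
    using J_phi[OF X] B[OF k] by simp
  also have "\<dots> \<longleftrightarrow> (\<forall>x\<in>X. mult (br k) x = bot)" by (simp add: supL)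
  also have "\<dots> \<longleftrightarrow> (\<forall>x\<in>X. le x k)"
  proof -
    have "\<forall>x\<in>X. mult (br k) x = bot \<longleftrightarrow> le x k"
      using B[OF k] phi_P X by (metis subsetD)
    thus ?thesis by blast
  qed
  finally show ?thesis .
qed

lemma le_refl: "k \<in> P \<Longrightarrow> le k k" unfolding bracket_le_def using P_idem by simp
lemma le_antisym: "x \<in> P \<Longrightarrow> y \<in> P \<Longrightarrow> le x y \<Longrightarrow> le y x \<Longrightarrow> x = y"
  unfolding bracket_le_def by (metis P_star star_mult)
lemma le_trans: "le x y \<Longrightarrow> le y z \<Longrightarrow> le x z"
  unfolding bracket_le_def by (metis assoc)

lemma CL: "complete_lattice_on P le (bracket_join br)"
  unfolding complete_lattice_on_def
proof (intro conjI ballI allI impI)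
  fix S assume S: "S \<subseteq> P"
  show "bracket_join br S \<in> P" by (rule J_P)
  fix x assume "x \<in> S"
  thus "le x (bracket_join br S)" using J_lub[OF S J_P] le_refl[OF J_P] by blast
next
  fix S y assume S: "S \<subseteq> P" and y: "y \<in> P" and "\<forall>x\<in>S. le x y"
  thus "le (bracket_join br S) y" using J_lub[OF S y] by blast
qed (auto intro: le_refl le_antisym le_trans)

lemma eq_P: "p \<in> P \<Longrightarrow> q \<in> P \<Longrightarrow> (\<And>k. k \<in> P \<Longrightarrow> le p k \<longleftrightarrow> le q k) \<Longrightarrow> p = q"
  using le_refl le_antisym by metis

lemma br_bot: "br bot = e"
proof -
  have "mult (br bot) x = x" for x using L1 mult_bot_left by blast
  thus ?thesis using unitR by metis
qed

lemma J_empty: "bracket_join br {} = bot"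
  unfolding bracket_join_def using br_bot br_e by simp

lemma bot_P: "bot \<in> P" using br_e br_P by metis

lemma act_eq: "perp star br (perp star br x) = phi x"
  unfolding perp_def by (simp add: br_star)

lemma LM: "left_module mult e P le (bracket_join br) (\<lambda>u k. phi (mult u k))"
  unfolding left_module_def
proof (intro conjI allI ballI impI)
  show "complete_lattice_on P le (bracket_join br)" by (rule CL)
next
  fix s a show "phi (mult s a) \<in> P" by (rule br_P)
next
  fix s B assume HB: "B \<subseteq> P"
  have BJ: "(\<lambda>x. phi (mult s x)) ` B \<subseteq> P" using br_P by auto
  show "phi (mult s (bracket_join br B)) = bracket_join br ((\<lambda>x. phi (mult s x)) ` B)"
  proof (rule eq_P[OF br_P J_P])
    fix k assume k: "k \<in> P"
    have "le (phi (mult s (bracket_join br B))) k \<longleftrightarrow> mult (mult (br k) s) (phi (Sup B)) = bot"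
      using B[OF k] J_phi[OF HB] by (simp add: assoc)
    also have "\<dots> \<longleftrightarrow> (\<forall>b\<in>B. mult (br k) (mult s b) = bot)"
      using B0[of "mult (br k) s" "Sup B"] by (simp add: supL assoc)
    also have "\<dots> \<longleftrightarrow> le (bracket_join br ((\<lambda>x. phi (mult s x)) ` B)) k"
      using J_lub[OF BJ k] B[OF k] by simp
    finally show "le (phi (mult s (bracket_join br B))) k \<longleftrightarrow> le (bracket_join br ((\<lambda>x. phi (mult s x)) ` B)) k" .
  qed
next
  fix T a assume a: "a \<in> P"
  have TJ: "(\<lambda>t. phi (mult t a)) ` T \<subseteq> P" using br_P by auto
  show "phi (mult (Sup T) a) = bracket_join br ((\<lambda>t. phi (mult t a)) ` T)"
  proof (rule eq_P[OF br_P J_P])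
    fix k assume k: "k \<in> P"
    have "le (phi (mult (Sup T) a)) k \<longleftrightarrow> (\<forall>t\<in>T. mult (br k) (mult t a) = bot)"
      using B[OF k] by (simp add: supL supR image_image)
    also have "\<dots> \<longleftrightarrow> le (bracket_join br ((\<lambda>t. phi (mult t a)) ` T)) k"
      using J_lub[OF TJ k] B[OF k] by simp
    finally show "le (phi (mult (Sup T) a)) k \<longleftrightarrow> le (bracket_join br ((\<lambda>t. phi (mult t a)) ` T)) k" .
  qed
next
  fix u v a assume a: "a \<in> P"
  show "phi (mult u (phi (mult v a))) = phi (mult (mult u v) a)"
  proof (rule eq_P[OF br_P br_P])
    fix k assume k: "k \<in> P"
    have "le (phi (mult u (phi (mult v a)))) k \<longleftrightarrow> mult (mult (br k) u) (phi (mult v a)) = bot"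
      using B[OF k] by (simp add: assoc)
    also have "\<dots> \<longleftrightarrow> mult (br k) (mult (mult u v) a) = bot" using B0[of "mult (br k) u" "mult v a"] by (simp add: assoc)
    also have "\<dots> \<longleftrightarrow> le (phi (mult (mult u v) a)) k" using B[OF k] by simp
    finally show "le (phi (mult u (phi (mult v a)))) k \<longleftrightarrow> le (phi (mult (mult u v) a)) k" .
  qed
next
  fix a assume "a \<in> P"
  thus "phi (mult e a) = a" using phi_P by (simp add: unitL)
qed

lemma J_single: "k \<in> P \<Longrightarrow> bracket_join br {k} = k"
  unfolding bracket_join_def using phi_P P_star by simp

lemma RM: "right_module (\<and>) True P le (bracket_join br) (two_action (bracket_join br))"
  unfolding right_module_def two_action_def J_empty
proof (intro conjI allI ballI impI)
  show "complete_lattice_on P le (bracket_join br)" by (rule CL)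
next
  fix s a assume "a \<in> P" thus "(if s then a else bot) \<in> P" using bot_P by simp
next
  fix s :: bool and B assume B: "B \<subseteq> P"
  show "(if s then bracket_join br B else bot) = bracket_join br ((\<lambda>x. if s then x else bot) ` B)"
  proof (cases s)
    case False
    then show ?thesis
      by (cases "B = {}") (auto simp: J_empty J_single[OF bot_P] image_constant_conv)
  qed simp
next
  fix T :: "bool set" and a assume a: "a \<in> P"
  have "T \<in> Pow {True, False}" by auto
  hence "T = {} \<or> T = {True} \<or> T = {False} \<or> T = {True, False}"
    by (simp add: Pow_insert; blast)
  moreover have "bracket_join br {a, bot} = a"
    unfolding bracket_join_def using phi_P[OF a] P_star[OF a] by simp
  ultimately show "(if Sup T then a else bot) = bracket_join br ((\<lambda>t. if t then a else bot) ` T)"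
    using J_single[OF a] J_single[OF bot_P] J_empty by (auto simp: insert_commute)
qed auto

end

theorem mainTheorem7:
  fixes mult :: "'a::complete_lattice \<Rightarrow> 'a \<Rightarrow> 'a"
    and e :: 'a and star :: "'a \<Rightarrow> 'a" and br :: "'a \<Rightarrow> 'a"
  assumes "foulis_quantale mult e star br"
  shows "left_module mult e (bracket_set br) (bracket_le mult) (bracket_join br)
           (\<lambda>u k. perp star br (perp star br (mult u k)))
       \<and> right_module (\<and>) True (bracket_set br) (bracket_le mult) (bracket_join br)
           (two_action (bracket_join br))"
proof -
  interpret fq mult e star br by (unfold_locales) (rule assms)
  have "bracket_set br = P" unfolding bracket_set_def P_def ..
  moreover have "(\<lambda>u k. perp star br (perp star br (mult u k))) = (\<lambda>u k. phi (mult u k))"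
    using act_eq by simp
  ultimately show ?thesis using LM RM by simp
qed

end
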